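(* Let $\pi=(O,h)$ be the complete prefix unfolding of a 1-safe net system. Let $e_1$ be a cut-off event of $\pi$ and $e_1'$ its corresponding event, and suppose $h(e_1\bullet)=h(e_1'\bullet)$. Then for every event $e_2$ of $\pi$, $e_1'\triangleright e_2$ implies $h(e_1)<_{tar}h(e_2)$.
   Context: Petri net system $S=(N,M_0)$, $N=(P,T,F)$, markings, enabling and firing $M'=M-\bullet t+t\bullet$ as usual; $S$ is 1-safe if every reachable marking has at most one token per place. Transition adjacency relation: $t_1<_{tar}t_2$ iff there is a reachable marking $M_s$ enabling $t_1$ such that after firing $t_1$ from $M_s$, $t_2$ is enabled. Occurrence net $O=(C,E,G)$, $x<y$ iff a directed path with at least one arc from $x$ to $y$; configurations (conflict-free, backward closed event sets), local configuration $[e]=\{x\mid x<e\text{ or }x=e\}$, $Cut(\mathcal C)=(Min(O)\cup\mathcal C\bullet)\setminus\bullet\mathcal C$, $Mark(\mathcal C)=h(Cut(\mathcal C))$. With an adequate order $\prec$ (strict well-founded partial order on configurations refining strict inclusion of local configurations), $e$ is a cut-off event if there is $e'$ with $Mark([e])=Mark([e'])$ and $[e']\prec[e]$, and $e'$ is then its corresponding event. The complete prefix unfolding is the greatest backward closed subnet of the unfolding containing no events after a cut-off event. For a set of nodes $Y$, $\bullet Y=\bigcup_{y\in Y}\bullet y$; $Max(E_0)=\{e\in E_0\mid\forall e'\in E_0: e\not<e'\}$. Max-Event Adjacency: for events $e<f$, $e\triangleright f$ iff $e\in Max(\bullet(\bullet f))$. *)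

theory Defs
  imports Main
begin

definition preset :: "('a \<times> 'a) set \<Rightarrow> 'a \<Rightarrow> 'a set" where
  "preset F x = {y. (y, x) \<in> F}"

definition postset :: "('a \<times> 'a) set \<Rightarrow> 'a \<Rightarrow> 'a set" where
  "postset F x = {y. (x, y) \<in> F}"

definition preset_set :: "('a \<times> 'a) set \<Rightarrow> 'a set \<Rightarrow> 'a set" where
  "preset_set F Y = (\<Union>y\<in>Y. preset F y)"

definition postset_set :: "('a \<times> 'a) set \<Rightarrow> 'a set \<Rightarrow> 'a set" where
  "postset_set F Y = (\<Union>y\<in>Y. postset F y)"

definition net_system :: "'n set \<Rightarrow> 'n set \<Rightarrow> ('n \<times> 'n) set \<Rightarrow> ('n \<Rightarrow> nat) \<Rightarrow> bool" where
  "net_system P T F M0 \<longleftrightarrow> P \<inter> T = {} \<and> F \<subseteq> (P \<times> T) \<union> (T \<times> P) \<and> (\<forall>x. x \<notin> P \<longrightarrow> M0 x = 0)"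

definition enabled :: "'n set \<Rightarrow> ('n \<times> 'n) set \<Rightarrow> ('n \<Rightarrow> nat) \<Rightarrow> 'n \<Rightarrow> bool" where
  "enabled T F M t \<longleftrightarrow> t \<in> T \<and> (\<forall>p \<in> preset F t. 1 \<le> M p)"

definition fire :: "('n \<times> 'n) set \<Rightarrow> ('n \<Rightarrow> nat) \<Rightarrow> 'n \<Rightarrow> ('n \<Rightarrow> nat)" where
  "fire F M t = (\<lambda>p. M p - (if p \<in> preset F t then 1 else 0) + (if p \<in> postset F t then 1 else 0))"

inductive_set reach :: "'n set \<Rightarrow> ('n \<times> 'n) set \<Rightarrow> ('n \<Rightarrow> nat) \<Rightarrow> ('n \<Rightarrow> nat) set"
  for T F M0 where
    reach_init: "M0 \<in> reach T F M0"
  | reach_step: "M \<in> reach T F M0 \<Longrightarrow> enabled T F M t \<Longrightarrow> fire F M t \<in> reach T F M0"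

definition one_safe :: "'n set \<Rightarrow> ('n \<times> 'n) set \<Rightarrow> ('n \<Rightarrow> nat) \<Rightarrow> bool" where
  "one_safe T F M0 \<longleftrightarrow> (\<forall>M \<in> reach T F M0. \<forall>p. M p \<le> 1)"

definition tar :: "'n set \<Rightarrow> ('n \<times> 'n) set \<Rightarrow> ('n \<Rightarrow> nat) \<Rightarrow> 'n \<Rightarrow> 'n \<Rightarrow> bool" where
  "tar T F M0 t1 t2 \<longleftrightarrow>
     (\<exists>Ms \<in> reach T F M0. enabled T F Ms t1 \<and> enabled T F (fire F Ms t1) t2)"

text \<open>x < y iff (x,y) in G^+.\<close>

definition conflict :: "'c set \<Rightarrow> ('c \<times> 'c) set \<Rightarrow> 'c \<Rightarrow> 'c \<Rightarrow> bool" where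
  "conflict E G x y \<longleftrightarrow>
     (\<exists>e1 \<in> E. \<exists>e2 \<in> E. e1 \<noteq> e2 \<and> preset G e1 \<inter> preset G e2 \<noteq> {}
        \<and> (e1, x) \<in> G\<^sup>* \<and> (e2, y) \<in> G\<^sup>*)"

definition occurrence_net :: "'c set \<Rightarrow> 'c set \<Rightarrow> ('c \<times> 'c) set \<Rightarrow> bool" where
  "occurrence_net C E G \<longleftrightarrow>
     C \<inter> E = {} \<and> G \<subseteq> (C \<times> E) \<union> (E \<times> C)
     \<and> (\<forall>b \<in> C. \<forall>e1 e2. e1 \<in> preset G b \<and> e2 \<in> preset G b \<longrightarrow> e1 = e2)
     \<and> (\<forall>x. (x, x) \<notin> G\<^sup>+)
     \<and> (\<forall>x. finite {y. (y, x) \<in> G\<^sup>+})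
     \<and> (\<forall>x \<in> C \<union> E. \<not> conflict E G x x)"

definition min_conds :: "'c set \<Rightarrow> ('c \<times> 'c) set \<Rightarrow> 'c set" where
  "min_conds C G = {b \<in> C. preset G b = {}}"

definition coset :: "'c set \<Rightarrow> 'c set \<Rightarrow> ('c \<times> 'c) set \<Rightarrow> 'c set \<Rightarrow> bool" where
  "coset C E G X \<longleftrightarrow> X \<subseteq> C \<and>
     (\<forall>x \<in> X. \<forall>y \<in> X. x \<noteq> y \<longrightarrow> (x, y) \<notin> G\<^sup>+ \<and> (y, x) \<notin> G\<^sup>+ \<and> \<not> conflict E G x y)"

definition branching_process ::
  "'n set \<Rightarrow> 'n set \<Rightarrow> ('n \<times> 'n) set \<Rightarrow> ('n \<Rightarrow> nat) \<Rightarrow>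
   'c set \<Rightarrow> 'c set \<Rightarrow> ('c \<times> 'c) set \<Rightarrow> ('c \<Rightarrow> 'n) \<Rightarrow> bool" where
  "branching_process P T F M0 C E G h \<longleftrightarrow>
     occurrence_net C E G
     \<and> h ` C \<subseteq> P \<and> h ` E \<subseteq> T
     \<and> (\<forall>e \<in> E. bij_betw h (preset G e) (preset F (h e))
                \<and> bij_betw h (postset G e) (postset F (h e)))
     \<and> (\<forall>p. finite {b \<in> min_conds C G. h b = p} \<and> card {b \<in> min_conds C G. h b = p} = M0 p)
     \<and> (\<forall>e1 \<in> E. \<forall>e2 \<in> E. preset G e1 = preset G e2 \<and> h e1 = h e2 \<longrightarrow> e1 = e2)"

text \<open>The unfolding: the maximal branching process, characterised by being closed
  under all possible extensions.\<close>
definition is_unfolding ::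
  "'n set \<Rightarrow> 'n set \<Rightarrow> ('n \<times> 'n) set \<Rightarrow> ('n \<Rightarrow> nat) \<Rightarrow>
   'c set \<Rightarrow> 'c set \<Rightarrow> ('c \<times> 'c) set \<Rightarrow> ('c \<Rightarrow> 'n) \<Rightarrow> bool" where
  "is_unfolding P T F M0 C E G h \<longleftrightarrow>
     branching_process P T F M0 C E G h
     \<and> (\<forall>t \<in> T. \<forall>X. coset C E G X \<and> bij_betw h X (preset F t) \<longrightarrow>
            (\<exists>e \<in> E. preset G e = X \<and> h e = t))"

definition configuration :: "'c set \<Rightarrow> ('c \<times> 'c) set \<Rightarrow> 'c set \<Rightarrow> bool" where
  "configuration E G K \<longleftrightarrow> K \<subseteq> E
     \<and> (\<forall>e \<in> K. \<forall>e' \<in> E. (e', e) \<in> G\<^sup>+ \<longrightarrow> e' \<in> K)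
     \<and> (\<forall>x \<in> K. \<forall>y \<in> K. \<not> conflict E G x y)"

definition local_config :: "'c set \<Rightarrow> ('c \<times> 'c) set \<Rightarrow> 'c \<Rightarrow> 'c set" where
  "local_config E G e = {x \<in> E. (x, e) \<in> G\<^sup>+ \<or> x = e}"

definition Cut :: "'c set \<Rightarrow> ('c \<times> 'c) set \<Rightarrow> 'c set \<Rightarrow> 'c set" where
  "Cut C G K = (min_conds C G \<union> postset_set G K) - preset_set G K"

definition Mark :: "'c set \<Rightarrow> ('c \<times> 'c) set \<Rightarrow> ('c \<Rightarrow> 'n) \<Rightarrow> 'c set \<Rightarrow> 'n set" where
  "Mark C G h K = h ` Cut C G K"

definition adequate_order :: "'c set \<Rightarrow> ('c \<times> 'c) set \<Rightarrow> ('c set \<Rightarrow> 'c set \<Rightarrow> bool) \<Rightarrow> bool" where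
  "adequate_order E G prec \<longleftrightarrow>
     (\<forall>K. configuration E G K \<longrightarrow> \<not> prec K K)
     \<and> (\<forall>K1 K2 K3. configuration E G K1 \<and> configuration E G K2 \<and> configuration E G K3
          \<and> prec K1 K2 \<and> prec K2 K3 \<longrightarrow> prec K1 K3)
     \<and> wf {(K1, K2). configuration E G K1 \<and> configuration E G K2 \<and> prec K1 K2}
     \<and> (\<forall>e \<in> E. \<forall>e' \<in> E. local_config E G e \<subset> local_config E G e'
          \<longrightarrow> prec (local_config E G e) (local_config E G e'))"

definition corresponding :: "'c set \<Rightarrow> 'c set \<Rightarrow> ('c \<times> 'c) set \<Rightarrow> ('c \<Rightarrow> 'n) \<Rightarrow>
    ('c set \<Rightarrow> 'c set \<Rightarrow> bool) \<Rightarrow> 'c \<Rightarrow> 'c \<Rightarrow> bool" where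
  "corresponding C E G h prec e e' \<longleftrightarrow> e \<in> E \<and> e' \<in> E
     \<and> Mark C G h (local_config E G e) = Mark C G h (local_config E G e')
     \<and> prec (local_config E G e') (local_config E G e)"

definition cutoff :: "'c set \<Rightarrow> 'c set \<Rightarrow> ('c \<times> 'c) set \<Rightarrow> ('c \<Rightarrow> 'n) \<Rightarrow>
    ('c set \<Rightarrow> 'c set \<Rightarrow> bool) \<Rightarrow> 'c \<Rightarrow> bool" where
  "cutoff C E G h prec e \<longleftrightarrow> (\<exists>e'. corresponding C E G h prec e e')"

definition prefix_events :: "'c set \<Rightarrow> 'c set \<Rightarrow> ('c \<times> 'c) set \<Rightarrow> ('c \<Rightarrow> 'n) \<Rightarrow>
    ('c set \<Rightarrow> 'c set \<Rightarrow> bool) \<Rightarrow> 'c set" where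
  "prefix_events C E G h prec =
     {e \<in> E. \<not> (\<exists>e0 \<in> E. cutoff C E G h prec e0 \<and> (e0, e) \<in> G\<^sup>+)}"

definition Max_events :: "('c \<times> 'c) set \<Rightarrow> 'c set \<Rightarrow> 'c set" where
  "Max_events G E0 = {e \<in> E0. \<forall>e' \<in> E0. (e, e') \<notin> G\<^sup>+}"

definition max_adj :: "('c \<times> 'c) set \<Rightarrow> 'c \<Rightarrow> 'c \<Rightarrow> bool" where
  "max_adj G e f \<longleftrightarrow> (e, f) \<in> G\<^sup>+ \<and> e \<in> Max_events G (preset_set G (preset G f))"

end

theory Submission
  imports Defs
begin

definition cnt :: "('c \<Rightarrow> 'n) \<Rightarrow> 'c set \<Rightarrow> 'n \<Rightarrow> nat" where
  "cnt h X = (\<lambda>p. card {b\<in>X. h b = p})"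

lemma fin_inj: assumes "inj_on h S" shows "finite {b\<in>S. h b = p}"
proof -
  have "inj_on h {b\<in>S. h b = p}" using assms by (rule inj_on_subset) auto
  moreover have "finite (h ` {b\<in>S. h b = p})" by (rule finite_subset[of _ "{p}"]) auto
  ultimately show ?thesis using finite_imageD by blast
qed

lemma card_bij: assumes "bij_betw h S S'" shows "card {b\<in>S. h b = p} = (if p \<in> S' then 1 else 0)"
proof (cases "p \<in> S'")
  case True
  then obtain b where b: "b \<in> S" "h b = p" using assms unfolding bij_betw_def by blast
  have "{b\<in>S. h b = p} = {b}" using b assms unfolding bij_betw_def inj_on_def by blast
  thus ?thesis using True by simp
next
  case False
  have e: "{b\<in>S. h b = p} = {}" using False assms unfolding bij_betw_def by blast
  show ?thesis using False by (simp add: e)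
qed

locale bp =
  fixes P T F M0 C E G h
  assumes bp: "branching_process P T F M0 C E G h"
begin

lemma occ: "occurrence_net C E G" using bp unfolding branching_process_def by blast
lemma CE: "C \<inter> E = {}" using occ unfolding occurrence_net_def by blast
lemma Gsub: "G \<subseteq> (C \<times> E) \<union> (E \<times> C)" using occ unfolding occurrence_net_def by blast
lemma uniq: "(e1,b) \<in> G \<Longrightarrow> (e2,b) \<in> G \<Longrightarrow> b \<in> C \<Longrightarrow> e1 = e2"
  using occ unfolding occurrence_net_def preset_def by blast
lemma acyc: "(x,x) \<notin> G\<^sup>+" using occ unfolding occurrence_net_def by blast
lemma finpred: "finite {y. (y,x) \<in> G\<^sup>+}" using occ unfolding occurrence_net_def by blast
lemma noself: "x \<in> E \<Longrightarrow> \<not> conflict E G x x" using occ unfolding occurrence_net_def by blast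
lemma hbij: "e \<in> E \<Longrightarrow> bij_betw h (preset G e) (preset F (h e)) \<and> bij_betw h (postset G e) (postset F (h e))"
  using bp unfolding branching_process_def by blast
lemma hT: "e \<in> E \<Longrightarrow> h e \<in> T" using bp unfolding branching_process_def by blast
lemma M0: "finite {b \<in> min_conds C G. h b = p} \<and> card {b \<in> min_conds C G. h b = p} = M0 p"
  using bp unfolding branching_process_def by blast

lemma pre_cond: "e \<in> E \<Longrightarrow> (b,e) \<in> G \<Longrightarrow> b \<in> C" using Gsub CE by blast
lemma post_cond: "e \<in> E \<Longrightarrow> (e,b) \<in> G \<Longrightarrow> b \<in> C" using Gsub CE by blast
lemma cond_pre_ev: "b \<in> C \<Longrightarrow> (g,b) \<in> G \<Longrightarrow> g \<in> E" using Gsub CE by blast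
lemma cond_post_ev: "b \<in> C \<Longrightarrow> (b,g) \<in> G \<Longrightarrow> g \<in> E" using Gsub CE by blast

lemma lc_fin: "finite (local_config E G e)"
proof -
  have "local_config E G e \<subseteq> insert e {y. (y,e) \<in> G\<^sup>+}" unfolding local_config_def by blast
  thus ?thesis by (rule finite_subset) (simp add: finpred)
qed

lemma lc_config: assumes "e \<in> E" shows "configuration E G (local_config E G e)"
proof -
  have 1: "local_config E G e \<subseteq> E" unfolding local_config_def by blast
  have 2: "\<forall>x \<in> local_config E G e. \<forall>e' \<in> E. (e', x) \<in> G\<^sup>+ \<longrightarrow> e' \<in> local_config E G e"
    unfolding local_config_def by (auto intro: trancl_trans)
  have 3: "\<not> conflict E G x y" if x: "x \<in> local_config E G e" and y: "y \<in> local_config E G e" for x y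
  proof
    assume "conflict E G x y"
    then obtain a b where ab: "a \<in> E" "b \<in> E" "a \<noteq> b" "preset G a \<inter> preset G b \<noteq> {}" "(a,x) \<in> G\<^sup>*" "(b,y) \<in> G\<^sup>*"
      unfolding conflict_def by blast
    have "(x,e) \<in> G\<^sup>*" using x unfolding local_config_def by auto
    with ab(5) have ae: "(a,e) \<in> G\<^sup>*" by (rule rtrancl_trans)
    have "(y,e) \<in> G\<^sup>*" using y unfolding local_config_def by auto
    with ab(6) have be: "(b,e) \<in> G\<^sup>*" by (rule rtrancl_trans)
    have "conflict E G e e" unfolding conflict_def using ab(1-4) ae be by blast
    with noself assms show False by blast
  qed
  show ?thesis unfolding configuration_def using 1 2 3 by blast
qed

lemma config_sub: "configuration E G K \<Longrightarrow> Q \<subseteq> K \<Longrightarrow> (\<forall>g\<in>Q. \<forall>g'\<in>E. (g',g) \<in> G\<^sup>+ \<longrightarrow> g' \<in> Q)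
   \<Longrightarrow> configuration E G Q"
  unfolding configuration_def by blast

lemma pre_in_cut:
  assumes K: "configuration E G (insert f Q)" and f: "f \<in> E" "f \<notin> Q"
    and preds: "\<forall>g\<in>E. (g,f) \<in> G\<^sup>+ \<longrightarrow> g \<in> Q"
  shows "preset G f \<subseteq> Cut C G Q"
proof
  fix b assume b: "b \<in> preset G f"
  hence bf: "(b,f) \<in> G" unfolding preset_def by simp
  hence bC: "b \<in> C" using pre_cond f by blast
  have "b \<in> min_conds C G \<union> postset_set G Q"
  proof (cases "preset G b = {}")
    case True thus ?thesis using bC unfolding min_conds_def by blast
  next
    case False
    then obtain g where gb: "(g,b) \<in> G" unfolding preset_def by blast
    hence "g \<in> E" using cond_pre_ev bC by blast
    moreover have "(g,f) \<in> G\<^sup>+" using gb bf by auto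
    ultimately have "g \<in> Q" using preds by blast
    thus ?thesis using gb unfolding postset_set_def postset_def by blast
  qed
  moreover have "b \<notin> preset_set G Q"
  proof
    assume "b \<in> preset_set G Q"
    then obtain g where g: "g \<in> Q" "(b,g) \<in> G" unfolding preset_set_def preset_def by blast
    have gE: "g \<in> E" using K g(1) unfolding configuration_def by blast
    have "g \<noteq> f" using g f by blast
    have "conflict E G g f" unfolding conflict_def
      using gE f(1) \<open>g \<noteq> f\<close> g(2) bf unfolding preset_def by blast
    moreover have "g \<in> insert f Q" "f \<in> insert f Q" using g by auto
    ultimately show False using K unfolding configuration_def by blast
  qed
  ultimately show "b \<in> Cut C G Q" unfolding Cut_def by blast
qed

lemma cut_step:
  assumes Q: "configuration E G Q" and f: "f \<in> E" "f \<notin> Q"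
  shows "Cut C G (insert f Q) = (Cut C G Q - preset G f) \<union> postset G f"
    and "postset G f \<inter> Cut C G Q = {}"
proof -
  have d1: "postset G f \<inter> preset_set G Q = {}"
  proof (rule ccontr)
    assume "postset G f \<inter> preset_set G Q \<noteq> {}"
    then obtain b g where "(f,b) \<in> G" "(b,g) \<in> G" "g \<in> Q"
      unfolding postset_def preset_set_def preset_def by blast
    hence "(f,g) \<in> G\<^sup>+" by auto
    thus False using Q \<open>g \<in> Q\<close> f unfolding configuration_def by blast
  qed
  have d2: "postset G f \<inter> preset G f = {}"
    using acyc unfolding postset_def preset_def by (metis (no_types, lifting) disjoint_iff mem_Collect_eq r_into_trancl' trancl_into_trancl)
  have d3: "postset G f \<inter> min_conds C G = {}"
    unfolding postset_def min_conds_def preset_def by blast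
  have d4: "postset G f \<inter> postset_set G Q = {}"
  proof (rule ccontr)
    assume "postset G f \<inter> postset_set G Q \<noteq> {}"
    then obtain b g where "(f,b) \<in> G" "(g,b) \<in> G" "g \<in> Q"
      unfolding postset_def postset_set_def by blast
    moreover have "b \<in> C" using post_cond f \<open>(f,b) \<in> G\<close> by blast
    ultimately show False using uniq f by blast
  qed
  have ps: "postset_set G (insert f Q) = postset G f \<union> postset_set G Q"
    "preset_set G (insert f Q) = preset G f \<union> preset_set G Q"
    unfolding postset_set_def preset_set_def by auto
  show "Cut C G (insert f Q) = (Cut C G Q - preset G f) \<union> postset G f"
    unfolding Cut_def ps using d1 d2 by blast
  show "postset G f \<inter> Cut C G Q = {}" unfolding Cut_def using d3 d4 by blast
qed

end

context bp begin

lemma fin_cut: assumes "finite Q" "Q \<subseteq> E" shows "finite {b\<in>Cut C G Q. h b = p}"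
proof -
  have "{b\<in>Cut C G Q. h b = p} \<subseteq> {b \<in> min_conds C G. h b = p} \<union> (\<Union>g\<in>Q. {b\<in>postset G g. h b = p})"
    unfolding Cut_def postset_set_def by blast
  moreover have "finite (\<Union>g\<in>Q. {b\<in>postset G g. h b = p})"
  proof (rule finite_UN_I[OF assms(1)])
    fix g assume "g \<in> Q" hence "g \<in> E" using assms by blast
    hence "inj_on h (postset G g)" using hbij unfolding bij_betw_def by blast
    thus "finite {b\<in>postset G g. h b = p}" by (rule fin_inj)
  qed
  ultimately show ?thesis using M0 by (meson finite_UnI finite_subset)
qed

lemma cnt_step:
  assumes Q: "configuration E G Q" "finite Q" and f: "f \<in> E" "f \<notin> Q"
    and pre: "preset G f \<subseteq> Cut C G Q"
  shows "enabled T F (cnt h (Cut C G Q)) (h f)"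
    and "cnt h (Cut C G (insert f Q)) = fire F (cnt h (Cut C G Q)) (h f)"
proof -
  have QE: "Q \<subseteq> E" using Q unfolding configuration_def by blast
  note cs = cut_step[OF Q(1) f]
  have bj: "bij_betw h (preset G f) (preset F (h f))" "bij_betw h (postset G f) (postset F (h f))"
    using hbij f by blast+
  have finA: "finite {b\<in>Cut C G Q. h b = p}" for p using fin_cut Q(2) QE by blast
  have sub: "{b\<in>preset G f. h b = p} \<subseteq> {b\<in>Cut C G Q. h b = p}" for p using pre by blast
  have cB: "card {b\<in>preset G f. h b = p} = (if p \<in> preset F (h f) then 1 else 0)" for p
    using card_bij[OF bj(1)] .
  have cD: "card {b\<in>postset G f. h b = p} = (if p \<in> postset F (h f) then 1 else 0)" for p
    using card_bij[OF bj(2)] .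
  show "enabled T F (cnt h (Cut C G Q)) (h f)"
    unfolding enabled_def cnt_def
  proof (intro conjI ballI)
    show "h f \<in> T" using hT f by blast
    fix p assume "p \<in> preset F (h f)"
    hence "card {b\<in>preset G f. h b = p} = 1" using cB by simp
    moreover have "card {b\<in>preset G f. h b = p} \<le> card {b\<in>Cut C G Q. h b = p}"
      by (rule card_mono[OF finA sub])
    ultimately show "1 \<le> card {b\<in>Cut C G Q. h b = p}" by simp
  qed
  show "cnt h (Cut C G (insert f Q)) = fire F (cnt h (Cut C G Q)) (h f)"
  proof
    fix p
    have eq: "{b\<in>Cut C G (insert f Q). h b = p} =
       ({b\<in>Cut C G Q. h b = p} - {b\<in>preset G f. h b = p}) \<union> {b\<in>postset G f. h b = p}"
      using cs(1) by blast
    have disj: "({b\<in>Cut C G Q. h b = p} - {b\<in>preset G f. h b = p}) \<inter> {b\<in>postset G f. h b = p} = {}"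
      using cs(2) by blast
    have finD: "finite {b\<in>postset G f. h b = p}"
      using bj(2) unfolding bij_betw_def by (blast intro: fin_inj)
    have "card {b\<in>Cut C G (insert f Q). h b = p} =
        card {b\<in>Cut C G Q. h b = p} - card {b\<in>preset G f. h b = p} + card {b\<in>postset G f. h b = p}"
      unfolding eq
      by (simp add: card_Un_disjoint[OF _ finD disj] finA card_Diff_subset[OF finite_subset[OF sub finA] sub])
    thus "cnt h (Cut C G (insert f Q)) p = fire F (cnt h (Cut C G Q)) (h f) p"
      unfolding cnt_def fire_def cB cD by simp
  qed
qed

lemma config_induct:
  assumes K: "finite K" "configuration E G K" and Q0: "configuration E G Q0" "Q0 \<subseteq> K" "R Q0"
    and step: "\<And>Q f. configuration E G Q \<Longrightarrow> Q0 \<subseteq> Q \<Longrightarrow> Q \<subseteq> K \<Longrightarrow> f \<in> K \<Longrightarrow> f \<notin> Q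
       \<Longrightarrow> configuration E G (insert f Q) \<Longrightarrow> (\<forall>g\<in>E. (g,f) \<in> G\<^sup>+ \<longrightarrow> g \<in> Q) \<Longrightarrow> R Q \<Longrightarrow> R (insert f Q)"
  shows "R K"
proof -
  have "\<forall>Q. card (K - Q) = n \<longrightarrow> configuration E G Q \<longrightarrow> Q0 \<subseteq> Q \<longrightarrow> Q \<subseteq> K \<longrightarrow> R Q \<longrightarrow> R K" for n
  proof (induction n)
    case 0
    then show ?case using K(1) by (metis Diff_eq_empty_iff card_0_eq finite_Diff subset_antisym)
  next
    case (Suc n)
    show ?case
    proof (intro allI impI)
      fix Q assume c: "card (K - Q) = Suc n" and Qc: "configuration E G Q" and Q0Q: "Q0 \<subseteq> Q"
        and QK: "Q \<subseteq> K" and RQ: "R Q"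
      have "K - Q \<noteq> {}" using c by (metis card.empty Zero_not_Suc)
      then obtain x where x: "x \<in> K - Q" by blast
      obtain f where f: "f \<in> K - Q" and fmin: "\<forall>y. y \<in> K - Q \<longrightarrow> card (local_config E G f) \<le> card (local_config E G y)"
        using ex_has_least_nat[of "\<lambda>y. y \<in> K - Q" x "\<lambda>y. card (local_config E G y)"] x by blast
      have KE: "K \<subseteq> E" using K(2) unfolding configuration_def by blast
      have preds: "\<forall>g\<in>E. (g,f) \<in> G\<^sup>+ \<longrightarrow> g \<in> Q"
      proof (intro ballI impI)
        fix g assume gE: "g \<in> E" and gf: "(g,f) \<in> G\<^sup>+"
        have gK: "g \<in> K" using K(2) f gE gf unfolding configuration_def by blast
        show "g \<in> Q"
        proof (rule ccontr)
          assume "g \<notin> Q"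
          hence le: "card (local_config E G f) \<le> card (local_config E G g)" using fmin gK by blast
          have "local_config E G g \<subset> local_config E G f"
          proof
            show "local_config E G g \<subseteq> local_config E G f"
              unfolding local_config_def using gf by (auto intro: trancl_trans)
            have "f \<in> local_config E G f" using f KE unfolding local_config_def by blast
            moreover have "f \<notin> local_config E G g"
              unfolding local_config_def using gf acyc by (auto dest: trancl_trans)
            ultimately show "local_config E G g \<noteq> local_config E G f" by blast
          qed
          hence "card (local_config E G g) < card (local_config E G f)"
            by (rule psubset_card_mono[OF lc_fin])
          thus False using le by simp
        qed
      qed
      have ci: "configuration E G (insert f Q)"
        using K(2) f QK Qc preds unfolding configuration_def by blast
      have "R (insert f Q)" using step[OF Qc Q0Q QK _ _ ci preds RQ] f by blast
      moreover have "card (K - insert f Q) = n" using c f K(1)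
        by (metis Diff_insert card_Diff_singleton diff_Suc_1 finite_Diff)
      ultimately show "R K" using Suc.IH ci Q0Q QK f by blast
    qed
  qed
  thus ?thesis using Q0 by blast
qed

lemma reach_cut: assumes "finite K" "configuration E G K"
  shows "cnt h (Cut C G K) \<in> reach T F M0"
proof (rule config_induct[OF assms, of "{}"])
  show "configuration E G {}" unfolding configuration_def by blast
  show "{} \<subseteq> K" by blast
  have "Cut C G {} = min_conds C G" unfolding Cut_def postset_set_def preset_set_def by simp
  hence "cnt h (Cut C G {}) = M0" unfolding cnt_def using M0 by auto
  thus "cnt h (Cut C G {}) \<in> reach T F M0" by (simp add: reach.reach_init)
next
  fix Q f assume Qc: "configuration E G Q" and QK: "Q \<subseteq> K" and f: "f \<in> K" "f \<notin> Q"
    and ci: "configuration E G (insert f Q)" and preds: "\<forall>g\<in>E. (g,f) \<in> G\<^sup>+ \<longrightarrow> g \<in> Q"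
    and R: "cnt h (Cut C G Q) \<in> reach T F M0"
  have fE: "f \<in> E" using ci unfolding configuration_def by blast
  have fQ: "finite Q" using QK assms(1) finite_subset by blast
  have pre: "preset G f \<subseteq> Cut C G Q" using pre_in_cut[OF ci fE f(2) preds] .
  show "cnt h (Cut C G (insert f Q)) \<in> reach T F M0"
    unfolding cnt_step(2)[OF Qc fQ fE f(2) pre]
    by (rule reach.reach_step[OF R cnt_step(1)[OF Qc fQ fE f(2) pre]])
qed

lemma safe_cnt: assumes "one_safe T F M0" "configuration E G K" "finite K"
  shows "cnt h (Cut C G K) p = (if p \<in> h ` Cut C G K then 1 else 0)"
    and "inj_on h (Cut C G K)"
proof -
  have KE: "K \<subseteq> E" using assms(2) unfolding configuration_def by blast
  have le: "card {b\<in>Cut C G K. h b = q} \<le> 1" for q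
  proof -
    have "\<forall>p. cnt h (Cut C G K) p \<le> 1"
      using reach_cut[OF assms(3,2)] assms(1) unfolding one_safe_def by blast
    thus ?thesis unfolding cnt_def by blast
  qed
  have fin: "finite {b\<in>Cut C G K. h b = q}" for q using fin_cut assms(3) KE by blast
  show "cnt h (Cut C G K) p = (if p \<in> h ` Cut C G K then 1 else 0)"
  proof (cases "p \<in> h ` Cut C G K")
    case True
    hence "{b\<in>Cut C G K. h b = p} \<noteq> {}" by blast
    hence "card {b\<in>Cut C G K. h b = p} \<noteq> 0" using fin by simp
    thus ?thesis using le[of p] True unfolding cnt_def by simp
  next
    case False
    hence e: "{b\<in>Cut C G K. h b = p} = {}" by blast
    show ?thesis using False unfolding cnt_def by (simp add: e)
  qed
  show "inj_on h (Cut C G K)"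
  proof (rule inj_onI)
    fix x y assume "x \<in> Cut C G K" "y \<in> Cut C G K" "h x = h y"
    hence "x \<in> {b\<in>Cut C G K. h b = h x}" "y \<in> {b\<in>Cut C G K. h b = h x}" by auto
    thus "x = y" using le[of "h x"] fin[of "h x"] card_le_Suc0_iff_eq by (metis One_nat_def)
  qed
qed

end

theorem proposition6:
  fixes P T :: "'n set" and F :: "('n \<times> 'n) set" and M0 :: "'n \<Rightarrow> nat"
    and C E :: "'c set" and G :: "('c \<times> 'c) set" and h :: "'c \<Rightarrow> 'n"
    and prec :: "'c set \<Rightarrow> 'c set \<Rightarrow> bool" and e1 e1' e2 :: 'c
  assumes "net_system P T F M0"
    and "one_safe T F M0"
    and "is_unfolding P T F M0 C E G h"
    and "adequate_order E G prec"
    and "e1 \<in> prefix_events C E G h prec"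
    and "corresponding C E G h prec e1 e1'"
    and "h ` postset G e1 = h ` postset G e1'"
    and "e2 \<in> prefix_events C E G h prec"
  shows "max_adj G e1' e2 \<longrightarrow> tar T F M0 (h e1) (h e2)"
proof
  assume madj: "max_adj G e1' e2"
  interpret bp P T F M0 C E G h using assms(3) unfolding is_unfolding_def by unfold_locales blast
  note safe = assms(2)
  have e1E: "e1 \<in> E" and e1'E: "e1' \<in> E"
    and MarkEq: "Mark C G h (local_config E G e1) = Mark C G h (local_config E G e1')"
    using assms(6) unfolding corresponding_def by blast+
  have e2E: "e2 \<in> E" using assms(8) unfolding prefix_events_def by blast
  have e12: "(e1', e2) \<in> G\<^sup>+" and emax: "e1' \<in> Max_events G (preset_set G (preset G e2))"
    using madj unfolding max_adj_def by blast+
  define t1 where "t1 = h e1"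
  define A where "A = local_config E G e1'"
  define K where "K = local_config E G e2 - {e2}"
  define L1 where "L1 = local_config E G e1"
  define B1 where "B1 = L1 - {e1}"
  define post1 where "post1 = postset G e1'"
  have Ac: "configuration E G A" "finite A" unfolding A_def using lc_config lc_fin e1'E by auto
  have L1c: "configuration E G L1" "finite L1" unfolding L1_def using lc_config lc_fin e1E by auto
  have L2c: "configuration E G (local_config E G e2)" using lc_config e2E by blast
  have Kc: "configuration E G K"
  proof (rule config_sub[OF L2c])
    show "K \<subseteq> local_config E G e2" unfolding K_def by blast
    show "\<forall>g\<in>K. \<forall>g'\<in>E. (g', g) \<in> G\<^sup>+ \<longrightarrow> g' \<in> K"
      unfolding K_def local_config_def using acyc by (blast intro: trancl_trans)
  qed
  have Kf: "finite K" unfolding K_def using lc_fin by blast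
  have B1c: "configuration E G B1"
  proof (rule config_sub[OF L1c(1)])
    show "B1 \<subseteq> L1" unfolding B1_def by blast
    show "\<forall>g\<in>B1. \<forall>g'\<in>E. (g', g) \<in> G\<^sup>+ \<longrightarrow> g' \<in> B1"
      unfolding B1_def L1_def local_config_def using acyc by (blast intro: trancl_trans)
  qed
  have B1f: "finite B1" unfolding B1_def using L1c by blast
  have L1eq: "insert e1 B1 = L1" unfolding B1_def L1_def local_config_def using e1E by blast
  have K2eq: "insert e2 K = local_config E G e2" unfolding K_def local_config_def using e2E by blast
  have e1B1: "e1 \<notin> B1" unfolding B1_def by blast
  have e2K: "e2 \<notin> K" unfolding K_def by blast
  have preds1: "\<forall>g\<in>E. (g,e1) \<in> G\<^sup>+ \<longrightarrow> g \<in> B1"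
    unfolding B1_def L1_def local_config_def using acyc by blast
  have preds2: "\<forall>g\<in>E. (g,e2) \<in> G\<^sup>+ \<longrightarrow> g \<in> K"
    unfolding K_def local_config_def using acyc by blast
  have AK: "A \<subseteq> K"
    unfolding A_def K_def local_config_def using e12 acyc by (blast intro: trancl_trans)
  have e1'K: "e1' \<in> A" unfolding A_def local_config_def using e1'E by blast
  have maxK: "(e1', g) \<notin> G\<^sup>+" if gK: "g \<in> K" for g
  proof
    assume eg: "(e1', g) \<in> G\<^sup>+"
    have gE: "g \<in> E" and ge2: "(g, e2) \<in> G\<^sup>+" using gK unfolding K_def local_config_def by auto
    obtain b where gb: "(g,b) \<in> G\<^sup>*" and be2: "(b,e2) \<in> G" using tranclD2[OF ge2] by blast
    have bC: "b \<in> C" using pre_cond[OF e2E be2] .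
    have "g \<noteq> b" using gE bC CE by blast
    hence gbp: "(g,b) \<in> G\<^sup>+" using gb by (simp add: rtrancl_eq_or_trancl)
    obtain g' where gg': "(g,g') \<in> G\<^sup>*" and g'b: "(g',b) \<in> G" using tranclD2[OF gbp] by blast
    have "g' \<in> preset_set G (preset G e2)"
      unfolding preset_set_def preset_def using g'b be2 by blast
    moreover have "(e1', g') \<in> G\<^sup>+" using eg gg' by (rule trancl_rtrancl_trancl)
    ultimately show False using emax unfolding Max_events_def by blast
  qed
  have post_in: "post1 \<subseteq> Cut C G Q" if "A \<subseteq> Q" "Q \<subseteq> K" for Q
  proof
    fix b assume b: "b \<in> post1"
    have "b \<in> postset_set G Q" using b e1'K that unfolding post1_def postset_set_def by blast
    moreover have "b \<notin> preset_set G Q"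
    proof
      assume "b \<in> preset_set G Q"
      then obtain g where g: "g \<in> Q" "(b,g) \<in> G" unfolding preset_set_def preset_def by blast
      have "(e1', b) \<in> G" using b unfolding post1_def postset_def by blast
      hence "(e1', g) \<in> G\<^sup>+" using g(2) by auto
      moreover have "g \<in> K" using g(1) that by blast
      ultimately show False using maxK by blast
    qed
    ultimately show "b \<in> Cut C G Q" unfolding Cut_def by blast
  qed
  have pre_disj: "preset G f \<inter> post1 = {}" if "f \<in> K" for f
  proof (rule ccontr)
    assume "preset G f \<inter> post1 \<noteq> {}"
    then obtain b where "(b,f) \<in> G" "(e1',b) \<in> G" unfolding preset_def post1_def postset_def by blast
    hence "(e1', f) \<in> G\<^sup>+" by auto
    thus False using maxK[OF that] by blast
  qed
  have post_t1: "postset F t1 = h ` post1"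
  proof -
    have "h ` postset G e1 = postset F (h e1)" using hbij[OF e1E] bij_betw_imp_surj_on by blast
    thus ?thesis using assms(7) unfolding t1_def post1_def by simp
  qed
  have geq: "1 \<le> cnt h (Cut C G Q) p" if "configuration E G Q" "A \<subseteq> Q" "Q \<subseteq> K" "p \<in> postset F t1" for Q p
  proof -
    have fQ: "finite Q" using that Kf finite_subset by blast
    have "p \<in> h ` Cut C G Q" using post_in[OF that(2,3)] that(4) post_t1 by blast
    thus ?thesis using safe_cnt(1)[OF safe that(1) fQ] by simp
  qed
  define N where "N Q = (\<lambda>p. cnt h (Cut C G Q) p - (if p \<in> postset F t1 then 1 else 0)
                                 + (if p \<in> preset F t1 then 1 else 0))" for Q
  have NA: "N A \<in> reach T F M0"
  proof -
    have pre1: "preset G e1 \<subseteq> Cut C G B1" using pre_in_cut[OF _ e1E e1B1 preds1] L1eq L1c by simp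
    note st = cnt_step[OF B1c B1f e1E e1B1 pre1]
    have Mb: "cnt h (Cut C G B1) \<in> reach T F M0" by (rule reach_cut[OF B1f B1c])
    have "cnt h (Cut C G L1) = cnt h (Cut C G A)"
    proof
      fix p
      have "h ` Cut C G L1 = h ` Cut C G A" using MarkEq unfolding Mark_def L1_def A_def .
      thus "cnt h (Cut C G L1) p = cnt h (Cut C G A) p"
        using safe_cnt(1)[OF safe L1c(1) L1c(2)] safe_cnt(1)[OF safe Ac(1) Ac(2)] by simp
    qed
    hence fA: "cnt h (Cut C G A) = fire F (cnt h (Cut C G B1)) t1" using st(2) L1eq unfolding t1_def by simp
    have "N A = cnt h (Cut C G B1)"
    proof
      fix p
      show "N A p = cnt h (Cut C G B1) p"
        using st(1) unfolding N_def fA fire_def enabled_def t1_def by auto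
    qed
    thus ?thesis using Mb by simp
  qed
  have NK: "N K \<in> reach T F M0"
  proof (rule config_induct[OF Kf Kc Ac(1) AK, of "\<lambda>Q. N Q \<in> reach T F M0"])
    show "N A \<in> reach T F M0" by (rule NA)
  next
    fix Q f assume Qc: "configuration E G Q" and AQ: "A \<subseteq> Q" and QK: "Q \<subseteq> K" and f: "f \<in> K" "f \<notin> Q"
      and ci: "configuration E G (insert f Q)" and preds: "\<forall>g\<in>E. (g,f) \<in> G\<^sup>+ \<longrightarrow> g \<in> Q"
      and R: "N Q \<in> reach T F M0"
    have fE: "f \<in> E" using ci unfolding configuration_def by blast
    have fQ: "finite Q" using QK Kf finite_subset by blast
    have pre: "preset G f \<subseteq> Cut C G Q" using pre_in_cut[OF ci fE f(2) preds] .
    note st = cnt_step[OF Qc fQ fE f(2) pre]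
    have inj: "inj_on h (Cut C G Q)" using safe_cnt(2)[OF safe Qc fQ] .
    have dj: "p \<notin> postset F t1" if pf: "p \<in> preset F (h f)" for p
    proof
      assume "p \<in> postset F t1"
      then obtain b' where b': "b' \<in> post1" "p = h b'" using post_t1 by blast
      obtain b where b: "b \<in> preset G f" "h b = p"
      proof -
        have "p \<in> h ` preset G f" using pf hbij[OF fE] unfolding bij_betw_def by simp
        thus ?thesis using that by blast
      qed
      have "b = b'" using inj b b' pre post_in[OF AQ QK] unfolding inj_on_def by blast
      thus False using pre_disj[OF f(1)] b b' by blast
    qed
    have gQ: "\<And>p. p \<in> postset F t1 \<Longrightarrow> 1 \<le> cnt h (Cut C G Q) p" using geq[OF Qc AQ QK] by blast
    have en: "enabled T F (N Q) (h f)"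
      using st(1) dj unfolding enabled_def N_def by auto
    have "fire F (N Q) (h f) = N (insert f Q)"
    proof
      fix p
      have e1: "p \<in> preset F (h f) \<Longrightarrow> 1 \<le> cnt h (Cut C G Q) p" using st(1) unfolding enabled_def by blast
      show "fire F (N Q) (h f) p = N (insert f Q) p"
        unfolding N_def st(2) fire_def using e1 dj[of p] gQ[of p] by auto
    qed
    thus "N (insert f Q) \<in> reach T F M0" using reach.reach_step[OF R en] by simp
  qed
  have gK: "\<And>p. p \<in> postset F t1 \<Longrightarrow> 1 \<le> cnt h (Cut C G K) p" using geq[OF Kc AK] by blast
  have en1: "enabled T F (N K) t1" using hT[OF e1E] unfolding enabled_def N_def t1_def by auto
  have fK: "fire F (N K) t1 = cnt h (Cut C G K)"
  proof
    fix p show "fire F (N K) t1 p = cnt h (Cut C G K) p"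
      unfolding fire_def N_def using gK[of p] by auto
  qed
  have pre2: "preset G e2 \<subseteq> Cut C G K" using pre_in_cut[OF _ e2E e2K preds2] K2eq L2c by simp
  have en2: "enabled T F (cnt h (Cut C G K)) (h e2)" using cnt_step(1)[OF Kc Kf e2E e2K pre2] .
  show "tar T F M0 (h e1) (h e2)" unfolding tar_def
    using NK en1 en2 fK unfolding t1_def by auto
qed

end
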